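(* Let $Z\subseteq\Sigma^{\mathbb Z}$ be a sofic shift, $\tilde f:\mathbb R^n\times\Sigma\to\mathbb R^n$, and consider the switched system $x(k+1)=\tilde f(x(k),z_k)$ driven by $\bar z\in Z$ (i.e. $f(x,\bar z)=\tilde f(x,z_0)$). Let $(C_1,\dots,C_K)$ be any graph-induced covering of $Z$ and $\mathcal G$ any presentation of it. The system is globally uniformly asymptotically stable if and only if there exists a $\mathcal G$-based Lyapunov function for it.
   Context: $\Sigma$ nonempty countable alphabet; $\Sigma^{\mathbb Z}$ bi-infinite sequences $\bar z=(z_k)_{k\in\mathbb Z}$; $\sigma(\bar z)_k=z_{k+1}$. A labeled graph is $\mathcal G=(S,E)$, $S$ finite, $E\subseteq S\times S\times\Sigma$; standing assumption: every node has at least one incoming and one outgoing edge. A bi-infinite walk labeled by $\bar z$ is $(e_k)_{k\in\mathbb Z}$ with $e_k=(s_k,s_{k+1},z_k)\in E$, starting at $s_0$. $\mathcal Z(\mathcal G)$ / $\mathcal Z(\mathcal G,s)$: labels of all bi-infinite walks / those starting at $s$. Sofic shift: a set $\mathcal Z(\mathcal G)$. Graph-induced covering of $Z$ with presentation $\mathcal G$: a family $(C_1,\dots,C_K)$ with $\mathcal G$ having nodes $s_1,\dots,s_K$, $\mathcal Z(\mathcal G)=Z$ and $C_j=\mathcal Z(\mathcal G,s_j)$. $\Phi(k,x_0,\bar z)$ is the solution at time $k$ with $x(0)=x_0$. Class $\mathcal K_\infty$ and $\mathcal{KL}$ as usual. GUAS: there is $\beta\in\mathcal{KL}$ with $|\Phi(k,x_0,\bar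 z)|\le\beta(|x_0|,k)$ for all $k\in\mathbb N,x_0\in\mathbb R^n,\bar z\in Z$. A $\mathcal G$-based Lyapunov function is $W:\mathbb R^n\times\{1,\dots,K\}\to\mathbb R$ such that there are $\alpha_1,\alpha_2\in\mathcal K_\infty$, $\gamma\in[0,1)$ with $\alpha_1(|x|)\le W(x,j)\le\alpha_2(|x|)$ for all $x,j$ and $W(f(x,\bar z),l)\le\gamma W(x,j)$ for all $x$, all edges $(s_j,s_l,i)\in E$ and all $\bar z\in C_j$ with $z_0=i$, $\sigma(\bar z)\in C_l$ (for switched systems: $W(\tilde f(x,i),l)\le\gamma W(x,j)$ for every edge $(s_j,s_l,i)\in E$). *)

theory Defs
  imports "HOL-Analysis.Analysis" "HOL-Library.Countable"
begin

text \<open>Labeled graphs: nodes are 0,...,K-1 (node s_j is j-1), edges are triples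
  (source, target, label).\<close>

definition labeled_graph :: "nat \<Rightarrow> (nat \<times> nat \<times> 'a) set \<Rightarrow> bool" where
  "labeled_graph K E \<longleftrightarrow>
     (\<forall>(j, l, i) \<in> E. j < K \<and> l < K) \<and>
     (\<forall>j<K. (\<exists>l i. (j, l, i) \<in> E) \<and> (\<exists>l i. (l, j, i) \<in> E))"

definition walk_labels_from :: "(nat \<times> nat \<times> 'a) set \<Rightarrow> nat \<Rightarrow> (int \<Rightarrow> 'a) set" where
  "walk_labels_from E s0 =
     {z. \<exists>s::int \<Rightarrow> nat. s 0 = s0 \<and> (\<forall>k. (s k, s (k + 1), z k) \<in> E)}"

definition walk_labels :: "(nat \<times> nat \<times> 'a) set \<Rightarrow> (int \<Rightarrow> 'a) set" where
  "walk_labels E = {z. \<exists>s::int \<Rightarrow> nat. \<forall>k. (s k, s (k + 1), z k) \<in> E}"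

fun sw_sol :: "('x \<Rightarrow> 'a \<Rightarrow> 'x) \<Rightarrow> nat \<Rightarrow> 'x \<Rightarrow> (int \<Rightarrow> 'a) \<Rightarrow> 'x" where
  "sw_sol ft 0 x0 z = x0"
| "sw_sol ft (Suc k) x0 z = ft (sw_sol ft k x0 z) (z (int k))"

definition class_K :: "(real \<Rightarrow> real) \<Rightarrow> bool" where
  "class_K \<alpha> \<longleftrightarrow> continuous_on {0..} \<alpha> \<and> strict_mono_on {0..} \<alpha> \<and> \<alpha> 0 = 0"

definition class_K_inf :: "(real \<Rightarrow> real) \<Rightarrow> bool" where
  "class_K_inf \<alpha> \<longleftrightarrow> class_K \<alpha> \<and> filterlim \<alpha> at_top at_top"

definition class_KL :: "(real \<Rightarrow> real \<Rightarrow> real) \<Rightarrow> bool" where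
  "class_KL \<beta> \<longleftrightarrow>
     (\<forall>t\<ge>0. class_K (\<lambda>r. \<beta> r t)) \<and>
     (\<forall>r\<ge>0. antimono_on {0..} (\<lambda>t. \<beta> r t) \<and> ((\<lambda>t. \<beta> r t) \<longlongrightarrow> 0) at_top)"

definition GUAS_sw :: "('x::real_normed_vector \<Rightarrow> 'a \<Rightarrow> 'x) \<Rightarrow> (int \<Rightarrow> 'a) set \<Rightarrow> bool" where
  "GUAS_sw ft Z \<longleftrightarrow> (\<exists>\<beta>. class_KL \<beta> \<and>
     (\<forall>k x0. \<forall>z\<in>Z. norm (sw_sol ft k x0 z) \<le> \<beta> (norm x0) (real k)))"

definition graph_lyapunov_sw ::
  "('x::real_normed_vector \<Rightarrow> 'a \<Rightarrow> 'x) \<Rightarrow> nat \<Rightarrow> (nat \<times> nat \<times> 'a) set \<Rightarrow> ('x \<Rightarrow> nat \<Rightarrow> real) \<Rightarrow> bool" where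
  "graph_lyapunov_sw ft K E W \<longleftrightarrow>
     (\<exists>\<alpha>1 \<alpha>2 \<gamma>. class_K_inf \<alpha>1 \<and> class_K_inf \<alpha>2 \<and> 0 \<le> \<gamma> \<and> \<gamma> < 1 \<and>
        (\<forall>x. \<forall>j<K. \<alpha>1 (norm x) \<le> W x j \<and> W x j \<le> \<alpha>2 (norm x)) \<and>
        (\<forall>x. \<forall>(j, l, i) \<in> E. W (ft x i) l \<le> \<gamma> * W x j))"

end

theory Submission
  imports Defs
begin


lemma cK_smono: "class_K a \<Longrightarrow> 0 \<le> x \<Longrightarrow> x < y \<Longrightarrow> a x < a y"
  unfolding class_K_def by (auto intro: strict_mono_onD)

lemma cK_mono: "class_K a \<Longrightarrow> 0 \<le> x \<Longrightarrow> x \<le> y \<Longrightarrow> a x \<le> a y"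
  by (metis cK_smono order_le_less)

lemma cK_zero: "class_K a \<Longrightarrow> a 0 = 0"
  unfolding class_K_def by auto

lemma cK_nonneg: "class_K a \<Longrightarrow> 0 \<le> x \<Longrightarrow> 0 \<le> a x"
  using cK_mono[of a 0 x] cK_zero[of a] by auto

lemma cK_pos: "class_K a \<Longrightarrow> 0 < x \<Longrightarrow> 0 < a x"
  using cK_smono[of a 0 x] cK_zero[of a] by auto

lemma cK_le_iff: "class_K a \<Longrightarrow> 0 \<le> x \<Longrightarrow> 0 \<le> y \<Longrightarrow> a x \<le> a y \<longleftrightarrow> x \<le> y"
  by (meson cK_mono cK_smono not_le)

lemma cK_cont: "class_K a \<Longrightarrow> continuous_on {0..} a"
  unfolding class_K_def by auto

lemma cKi_surj:
  assumes "class_K_inf a" "0 \<le> y"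
  shows "\<exists>x\<ge>0. a x = y"
proof -
  have K: "class_K a" and lim: "filterlim a at_top at_top" using assms unfolding class_K_inf_def by auto
  from lim have "eventually (\<lambda>x. y \<le> a x) at_top" by (simp add: filterlim_at_top)
  then obtain X where X: "\<And>x. x \<ge> X \<Longrightarrow> y \<le> a x" by (auto simp: eventually_at_top_linorder)
  define b where "b = max X 0"
  have "y \<le> a b" using X b_def by auto
  moreover have "a 0 \<le> y" using cK_zero[OF K] assms by simp
  moreover have "continuous_on {0..b} a" using cK_cont[OF K] by (rule continuous_on_subset) auto
  ultimately obtain x where "0 \<le> x" "x \<le> b" "a x = y"
    using IVT'[of a 0 y b] b_def by auto
  then show ?thesis by auto
qed

lemma cKi_inverse:
  assumes "class_K_inf a"
  shows "\<exists>ia. class_K ia \<and> (\<forall>y\<ge>0. 0 \<le> ia y \<and> a (ia y) = y) \<and> (\<forall>x\<ge>0. ia (a x) = x)"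
proof -
  have K: "class_K a" using assms unfolding class_K_inf_def by auto
  define ia where "ia y = (SOME x. 0 \<le> x \<and> a x = y)" for y
  have ia1: "0 \<le> ia y \<and> a (ia y) = y" if "0 \<le> y" for y
    unfolding ia_def using cKi_surj[OF assms that] by (rule someI_ex)
  have ia2: "ia (a x) = x" if "0 \<le> x" for x
  proof -
    have "0 \<le> a x" using cK_nonneg[OF K that] .
    then have "0 \<le> ia (a x)" "a (ia (a x)) = a x" using ia1 by auto
    then show ?thesis using that cK_le_iff[OF K, of "ia (a x)" x] cK_le_iff[OF K, of x "ia (a x)"] by auto
  qed
  have smono: "ia y < ia y'" if "0 \<le> y" "y < y'" for y y'
  proof (rule ccontr)
    assume "\<not> ia y < ia y'"
    then have "ia y' \<le> ia y" by simp
    then have "a (ia y') \<le> a (ia y)" using ia1[of y'] that by (intro cK_mono[OF K]) auto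
    then show False using ia1[of y] ia1[of y'] that by auto
  qed
  have cont: "continuous_on {0..} ia"
    unfolding continuous_on_iff
  proof (intro ballI allI impI)
    fix y e :: real assume y: "y \<in> {0..}" and e: "0 < e"
    define x where "x = ia y"
    have x0: "0 \<le> x" and ax: "a x = y" using ia1[of y] y x_def by auto
    have up: "y < a (x + e)" using cK_smono[OF K x0, of "x+e"] e ax by auto
    define d where "d = (if e \<le> x then min (a (x+e) - y) (y - a (x - e)) else a (x+e) - y)"
    have lo: "a (x - e) < y" if "e \<le> x" using cK_smono[OF K, of "x-e" x] that e ax by auto
    have d0: "0 < d" unfolding d_def using up lo by auto
    show "\<exists>d>0. \<forall>y'\<in>{0..}. dist y' y < d \<longrightarrow> dist (ia y') (ia y) < e"
    proof (intro exI conjI ballI impI)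
      show "0 < d" by fact
      fix y' assume y': "y' \<in> {0..}" and dd: "dist y' y < d"
      have y'0: "0 \<le> y'" using y' by auto
      have "y' < a (x+e)" using dd unfolding d_def dist_real_def by (auto split: if_splits)
      then have "ia y' < x + e"
        using ia1[OF y'0] by (metis K add_nonneg_nonneg cK_le_iff e less_eq_real_def linorder_not_le x0)
      moreover have "x - e < ia y'"
      proof (cases "e \<le> x")
        case True
        then have "a (x - e) < y'" using dd unfolding d_def dist_real_def by auto
        then show ?thesis using ia1[OF y'0] True by (metis K cK_le_iff diff_ge_0_iff_ge linorder_not_le)
      next
        case False then show ?thesis using ia1[OF y'0] by auto
      qed
      ultimately show "dist (ia y') (ia y) < e" unfolding dist_real_def x_def[symmetric] by auto
    qed
  qed
  have "class_K ia" unfolding class_K_def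
    using cont smono ia2[of 0] cK_zero[OF K] by (auto intro!: strict_mono_onI)
  then show ?thesis using ia1 ia2 by blast
qed



lemma walk_nodes:
  assumes "labeled_graph K E" "\<forall>k. (s k, s (k + 1), z k) \<in> E"
  shows "s k < K"
proof -
  have "(s k, s (k + 1), z k) \<in> E" using assms(2) by blast
  moreover have "\<forall>(j, l, i) \<in> E. j < K \<and> l < K" using assms(1) unfolding labeled_graph_def by blast
  ultimately show ?thesis by auto
qed

lemma lyap_imp_GUAS:
  fixes ft :: "'x::real_normed_vector \<Rightarrow> 'a \<Rightarrow> 'x"
  assumes LG: "labeled_graph K E" and L: "graph_lyapunov_sw ft K E W"
  shows "GUAS_sw ft (walk_labels E)"
proof -
  from L obtain a1 a2 \<gamma> where A1: "class_K_inf a1" and A2: "class_K_inf a2" and g0: "0 \<le> \<gamma>" and g1: "\<gamma> < 1"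
    and bd: "\<forall>x. \<forall>j<K. a1 (norm x) \<le> W x j \<and> W x j \<le> a2 (norm x)"
    and dc: "\<forall>x. \<forall>(j, l, i) \<in> E. W (ft x i) l \<le> \<gamma> * W x j"
    unfolding graph_lyapunov_sw_def by blast
  have bnd: "a1 (norm x) \<le> W x j \<and> W x j \<le> a2 (norm x)" if "j < K" for x j using bd that by blast
  have dec: "W (ft x i) l \<le> \<gamma> * W x j" if "(j, l, i) \<in> E" for x j l i
  proof -
    have "\<forall>(j, l, i) \<in> E. W (ft x i) l \<le> \<gamma> * W x j" using dc by blast
    then show ?thesis using that by auto
  qed
  have K1: "class_K a1" and K2: "class_K a2" using A1 A2 unfolding class_K_inf_def by auto
  obtain ia where KI: "class_K ia" and ia1: "\<And>y. 0 \<le> y \<Longrightarrow> 0 \<le> ia y \<and> a1 (ia y) = y"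
    and ia2: "\<And>x. 0 \<le> x \<Longrightarrow> ia (a1 x) = x"
    using cKi_inverse[OF A1] by blast
  define c where "c = max \<gamma> (1/2)"
  have c0: "0 < c" and c1: "c < 1" and gc: "\<gamma> \<le> c" using g1 unfolding c_def by auto
  define lam where "lam = - ln c"
  have lam0: "0 < lam" unfolding lam_def using c0 c1 by simp
  define \<beta> where "\<beta> r t = ia (exp (- (lam * t)) * a2 r)" for r t
  have ck: "class_K (\<lambda>r. \<beta> r t)" for t
  proof -
    have c1: "continuous_on {0..} (\<lambda>r. exp (- (lam * t)) * a2 r)"
      by (rule continuous_on_mult[OF continuous_on_const cK_cont[OF K2]])
    have c2: "(\<lambda>r. exp (- (lam * t)) * a2 r) ` {0..} \<subseteq> {0..}"
    proof
      fix y assume "y \<in> (\<lambda>r. exp (- (lam * t)) * a2 r) ` {0..}"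
      then obtain r where "r \<in> {0..}" "y = exp (- (lam * t)) * a2 r" by blast
      then show "y \<in> {0..}" using cK_nonneg[OF K2, of r] by simp
    qed
    have cont: "continuous_on {0..} (\<lambda>r. \<beta> r t)"
      unfolding \<beta>_def by (rule continuous_on_compose2[OF cK_cont[OF KI] c1 c2])
    have sm: "strict_mono_on {0..} (\<lambda>r. \<beta> r t)"
    proof (rule strict_mono_onI)
      fix r s :: real assume rs: "r \<in> {0..}" "s \<in> {0..}" "r < s"
      then have "a2 r < a2 s" by (intro cK_smono[OF K2]) auto
      moreover have "0 \<le> a2 r" using rs cK_nonneg[OF K2, of r] by simp
      ultimately show "\<beta> r t < \<beta> s t"
        unfolding \<beta>_def by (intro cK_smono[OF KI]) auto
    qed
    have z: "\<beta> 0 t = 0" unfolding \<beta>_def using cK_zero[OF K2] cK_zero[OF KI] by simp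
    show ?thesis unfolding class_K_def using cont sm z by blast
  qed
  have anti: "antimono_on {0..} (\<lambda>t. \<beta> r t)" if r: "0 \<le> r" for r
    unfolding monotone_on_def \<beta>_def
  proof (intro ballI impI)
    fix t t' :: real assume "t \<in> {0..}" "t' \<in> {0..}" "t \<le> t'"
    then have "exp (- (lam * t')) \<le> exp (- (lam * t))" using lam0 by (simp add: mult_left_mono)
    moreover have "0 \<le> a2 r" using cK_nonneg[OF K2 r] .
    ultimately show "ia (exp (- (lam * t')) * a2 r) \<le> ia (exp (- (lam * t)) * a2 r)"
      by (intro cK_mono[OF KI]) (auto intro: mult_right_mono)
  qed
  have lim: "((\<lambda>t. \<beta> r t) \<longlongrightarrow> 0) at_top" if r0: "0 \<le> r" for r
  proof -
    have e: "((\<lambda>t. exp (- (lam * t))) \<longlongrightarrow> 0) at_top"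
      using lam0 by (metis exp_at_bot filterlim_at_top_mirror filterlim_cmult_at_bot_at_top
          filterlim_compose filterlim_uminus_at_top filterlim_uminus_at_top_at_bot
          less_numeral_extra(3))
    have "((\<lambda>t. exp (- (lam * t)) * a2 r) \<longlongrightarrow> 0 * a2 r) at_top"
      by (intro tendsto_mult e tendsto_const)
    then have "((\<lambda>t. ia (exp (- (lam * t)) * a2 r)) \<longlongrightarrow> ia 0) at_top"
      by (intro continuous_on_tendsto_compose[OF cK_cont[OF KI]]) (auto simp: cK_nonneg[OF K2 r0])
    then show ?thesis unfolding \<beta>_def using cK_zero[OF KI] by simp
  qed
  have KL: "class_KL \<beta>" unfolding class_KL_def using ck anti lim by blast
  have bound: "norm (sw_sol ft k x0 z) \<le> \<beta> (norm x0) (real k)" if z: "z \<in> walk_labels E" for k x0 z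
  proof -
    obtain s where s: "\<forall>k. (s k, s (k + 1), z k) \<in> E" using z unfolding walk_labels_def by auto
    have sK: "s k < K" for k using walk_nodes[OF LG s] .
    have step: "W (sw_sol ft n x0 z) (s (int n)) \<le> \<gamma> ^ n * W x0 (s 0)" for n
    proof (induction n)
      case 0 then show ?case by simp
    next
      case (Suc n)
      have "W (sw_sol ft (Suc n) x0 z) (s (int (Suc n))) = W (ft (sw_sol ft n x0 z) (z (int n))) (s (int n + 1))"
        by (simp add: add.commute)
      also have "\<dots> \<le> \<gamma> * W (sw_sol ft n x0 z) (s (int n))" using dec[of "s (int n)" "s (int n + 1)" "z (int n)"] s by blast
      also have "\<dots> \<le> \<gamma> * (\<gamma> ^ n * W x0 (s 0))" using Suc.IH g0 by (rule mult_left_mono)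
      finally show ?case by simp
    qed
    have "a1 (norm (sw_sol ft k x0 z)) \<le> W (sw_sol ft k x0 z) (s (int k))" using bnd[of "s (int k)"] sK by blast
    also have "\<dots> \<le> \<gamma> ^ k * W x0 (s 0)" by (rule step)
    also have "\<dots> \<le> \<gamma> ^ k * a2 (norm x0)" using bnd[of "s 0" x0] sK g0 by (intro mult_left_mono) auto
    also have "\<dots> \<le> c ^ k * a2 (norm x0)" using g0 gc cK_nonneg[OF K2, of "norm x0"]
      by (intro mult_right_mono power_mono) auto
    also have "c ^ k = exp (real k * ln c)" using c0 by (simp add: exp_of_nat_mult)
    also have "\<dots> = exp (- (lam * real k))" unfolding lam_def by (simp add: mult.commute)
    finally have le: "a1 (norm (sw_sol ft k x0 z)) \<le> exp (- (lam * real k)) * a2 (norm x0)" .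
    have "norm (sw_sol ft k x0 z) = ia (a1 (norm (sw_sol ft k x0 z)))" using ia2 by simp
    also have "\<dots> \<le> \<beta> (norm x0) (real k)" unfolding \<beta>_def
      by (rule cK_mono[OF KI _ le]) (simp add: cK_nonneg[OF K1])
    finally show ?thesis .
  qed
  show ?thesis unfolding GUAS_sw_def using KL bound by blast
qed



definition NN :: "(real \<Rightarrow> real \<Rightarrow> real) \<Rightarrow> nat \<Rightarrow> real \<Rightarrow> nat" where
  "NN b m s = (LEAST k. b (real m) (real k) < s)"
definition MM :: "real \<Rightarrow> nat" where "MM s = nat \<lceil>1/s\<rceil> + 1"
definition PP :: "(real \<Rightarrow> real \<Rightarrow> real) \<Rightarrow> real \<Rightarrow> nat" where "PP b s = NN b (MM s) s"
definition ff :: "(real \<Rightarrow> real \<Rightarrow> real) \<Rightarrow> real \<Rightarrow> real" where "ff b s = s * (1/2) ^ PP b s"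
definition gg :: "(real \<Rightarrow> real \<Rightarrow> real) \<Rightarrow> real \<Rightarrow> real" where
  "gg b s = Inf ((\<lambda>t. ff b t + \<bar>s - t\<bar>) ` {0..})"
definition aone :: "(real \<Rightarrow> real \<Rightarrow> real) \<Rightarrow> real \<Rightarrow> real" where "aone b s = gg b s * s / (1 + s)"
definition DD :: "(real \<Rightarrow> real \<Rightarrow> real) \<Rightarrow> real \<Rightarrow> real" where
  "DD b r = Sup (range (\<lambda>k::nat. 2 ^ k * aone b (b r (real k))))"
definition psi :: "real \<Rightarrow> real" where "psi u = max 0 (min 1 (1 - u))"
definition aa :: "(real \<Rightarrow> real \<Rightarrow> real) \<Rightarrow> real \<Rightarrow> real" where
  "aa b s = Sup ((\<lambda>t. DD b t * psi (t - s)) ` {0..})"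
definition atwo :: "(real \<Rightarrow> real \<Rightarrow> real) \<Rightarrow> real \<Rightarrow> real" where "atwo b s = b s 0 + s * aa b s + s"

lemma psi_nonneg: "0 \<le> psi u" unfolding psi_def by simp
lemma psi_le1: "psi u \<le> 1" unfolding psi_def by simp
lemma psi_zero: "1 \<le> u \<Longrightarrow> psi u = 0" unfolding psi_def by simp
lemma psi_0: "psi 0 = 1" unfolding psi_def by simp
lemma psi_anti: "u \<le> v \<Longrightarrow> psi v \<le> psi u" unfolding psi_def by simp
lemma psi_lip: "psi u \<le> psi v + \<bar>u - v\<bar>" unfolding psi_def by (simp add: max_def min_def abs_if)

context
  fixes b :: "real \<Rightarrow> real \<Rightarrow> real"
  assumes KL: "class_KL b"
begin

lemma KL_K: "0 \<le> t \<Longrightarrow> class_K (\<lambda>r. b r t)"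
  using KL unfolding class_KL_def by blast

lemma KL_nonneg: "0 \<le> r \<Longrightarrow> 0 \<le> t \<Longrightarrow> 0 \<le> b r t"
  using cK_nonneg[OF KL_K, of t r] by simp

lemma KL_pos: "0 < r \<Longrightarrow> 0 \<le> t \<Longrightarrow> 0 < b r t"
  using cK_pos[OF KL_K, of t r] by simp

lemma KL_mono_r: "0 \<le> r \<Longrightarrow> r \<le> r' \<Longrightarrow> 0 \<le> t \<Longrightarrow> b r t \<le> b r' t"
  using cK_mono[OF KL_K, of t r r'] by simp

lemma KL_anti: "0 \<le> r \<Longrightarrow> 0 \<le> t \<Longrightarrow> t \<le> t' \<Longrightarrow> b r t' \<le> b r t"
proof -
  assume a: "0 \<le> r" "0 \<le> t" "t \<le> t'"
  have "antimono_on {0..} (\<lambda>t. b r t)" using KL a unfolding class_KL_def by blast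
  then show ?thesis using a unfolding monotone_on_def by auto
qed

lemma KL_seq: "0 \<le> r \<Longrightarrow> 0 < s \<Longrightarrow> \<exists>k::nat. b r (real k) < s"
proof -
  assume r: "0 \<le> r" and s: "0 < s"
  have "((\<lambda>t. b r t) \<longlongrightarrow> 0) at_top" using KL r unfolding class_KL_def by blast
  then have "eventually (\<lambda>t. b r t < s) at_top" using s by (rule order_tendstoD(2))
  then obtain N where N: "\<And>t. t \<ge> N \<Longrightarrow> b r t < s" by (auto simp: eventually_at_top_linorder)
  have "real (nat \<lceil>N\<rceil>) \<ge> N" by linarith
  then show ?thesis using N by blast
qed

lemma N_spec: "0 < s \<Longrightarrow> b (real m) (real (NN b m s)) < s"
  unfolding NN_def using KL_seq[of "real m" s] by (auto intro: LeastI_ex)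

lemma N_gt: "0 < s \<Longrightarrow> s \<le> b (real m) (real k) \<Longrightarrow> k < NN b m s"
proof (rule ccontr)
  assume s: "0 < s" "s \<le> b (real m) (real k)" and "\<not> k < NN b m s"
  then have "real (NN b m s) \<le> real k" by simp
  then have "b (real m) (real k) \<le> b (real m) (real (NN b m s))" by (intro KL_anti) auto
  then show False using N_spec[OF s(1), of m] s by simp
qed

lemma N_mono_s: "0 < s \<Longrightarrow> s \<le> s' \<Longrightarrow> NN b m s' \<le> NN b m s"
proof -
  assume s: "0 < s" "s \<le> s'"
  have "b (real m) (real (NN b m s)) < s'" using N_spec[OF s(1), of m] s by simp
  then show ?thesis unfolding NN_def[of b m s'] by (rule Least_le)
qed

lemma N_mono_m: "0 < s \<Longrightarrow> m \<le> m' \<Longrightarrow> NN b m s \<le> NN b m' s"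
proof -
  assume s: "0 < s" "m \<le> m'"
  have "b (real m) (real (NN b m' s)) \<le> b (real m') (real (NN b m' s))" using s by (intro KL_mono_r) auto
  then have "b (real m) (real (NN b m' s)) < s" using N_spec[OF s(1), of m'] by simp
  then show ?thesis unfolding NN_def[of b m s] by (rule Least_le)
qed

end

lemma MM_ge1: "1 \<le> MM s" unfolding MM_def by simp

lemma MM_anti: "0 < s \<Longrightarrow> s \<le> s' \<Longrightarrow> MM s' \<le> MM s"
proof -
  assume "0 < s" "s \<le> s'"
  then have "1/s' \<le> 1/s" by (intro divide_left_mono) auto
  then have "\<lceil>1/s'\<rceil> \<le> \<lceil>1/s\<rceil>" by (rule ceiling_mono)
  then have "nat \<lceil>1/s'\<rceil> \<le> nat \<lceil>1/s\<rceil>" by (rule nat_mono)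
  then show ?thesis unfolding MM_def by (rule add_right_mono)
qed

lemma MM_big: "0 < s \<Longrightarrow> s \<le> 1 / real m \<Longrightarrow> m \<le> MM s"
proof -
  assume s: "0 < s" "s \<le> 1 / real m"
  show ?thesis
  proof (cases "m = 0")
    case True then show ?thesis by simp
  next
    case False
    then have "real m * s \<le> 1" using s by (simp add: field_simps)
    then have "real m \<le> 1 / s" using s by (simp add: field_simps)
    then have "real m \<le> real_of_int \<lceil>1/s\<rceil>" by (meson le_of_int_ceiling order_trans)
    then show ?thesis unfolding MM_def by linarith
  qed
qed

lemma MM_le2: "1 \<le> s \<Longrightarrow> MM s \<le> 2"
proof -
  assume "1 \<le> s"
  then have "1/s \<le> 1" by simp
  then have "\<lceil>1/s\<rceil> \<le> 1" by linarith
  then show ?thesis unfolding MM_def by simp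
qed



context
  fixes b :: "real \<Rightarrow> real \<Rightarrow> real"
  assumes KL: "class_KL b"
begin

lemma PP_anti: "0 < s \<Longrightarrow> s \<le> s' \<Longrightarrow> PP b s' \<le> PP b s"
proof -
  assume s: "0 < s" "s \<le> s'"
  have "NN b (MM s') s' \<le> NN b (MM s) s'" using s MM_anti[OF s] by (intro N_mono_m[OF KL]) auto
  also have "\<dots> \<le> NN b (MM s) s" using s by (intro N_mono_s[OF KL]) auto
  finally show ?thesis unfolding PP_def .
qed

lemma ff_nonneg: "0 \<le> s \<Longrightarrow> 0 \<le> ff b s" unfolding ff_def by simp
lemma ff_pos: "0 < s \<Longrightarrow> 0 < ff b s" unfolding ff_def by simp
lemma ff_le: "0 \<le> s \<Longrightarrow> ff b s \<le> s"
proof -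
  assume "0 \<le> s"
  moreover have "(1/2::real) ^ PP b s \<le> 1" by (rule power_le_one) auto
  ultimately show ?thesis unfolding ff_def by (simp add: mult_left_le)
qed
lemma ff_zero: "ff b 0 = 0" unfolding ff_def by simp

lemma ff_mono: "0 \<le> s \<Longrightarrow> s \<le> s' \<Longrightarrow> ff b s \<le> ff b s'"
proof -
  assume s: "0 \<le> s" "s \<le> s'"
  show ?thesis
  proof (cases "s = 0")
    case True then show ?thesis using ff_nonneg[of s'] s by (simp add: ff_zero)
  next
    case False
    then have "PP b s' \<le> PP b s" using s by (intro PP_anti) auto
    then have "(1/2::real) ^ PP b s \<le> (1/2) ^ PP b s'" by (intro power_decreasing) auto
    then show ?thesis unfolding ff_def using s by (intro mult_mono) auto
  qed
qed

lemma ff_lin: "1 \<le> s \<Longrightarrow> s * (1/2) ^ NN b 2 1 \<le> ff b s"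
proof -
  assume s: "1 \<le> s"
  have "PP b s = NN b (MM s) s" unfolding PP_def ..
  also have "\<dots> \<le> NN b 2 s" using MM_le2[OF s] s by (intro N_mono_m[OF KL]) auto
  also have "\<dots> \<le> NN b 2 1" using s by (intro N_mono_s[OF KL]) auto
  finally have "(1/2::real) ^ NN b 2 1 \<le> (1/2) ^ PP b s" by (intro power_decreasing) auto
  then show ?thesis unfolding ff_def using s by (intro mult_left_mono) auto
qed

lemma two_half: "k \<le> P \<Longrightarrow> (2::real) ^ k * (1/2) ^ P \<le> 1"
proof -
  assume "k \<le> P"
  then have "(1/2::real) ^ P \<le> (1/2) ^ k" by (intro power_decreasing) auto
  then have "(2::real) ^ k * (1/2) ^ P \<le> 2 ^ k * (1/2) ^ k" by (intro mult_left_mono) auto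
  also have "\<dots> = 1" by (simp add: power_mult_distrib[symmetric])
  finally show ?thesis .
qed

lemma KB:
  assumes r: "0 \<le> r" "r \<le> real m" and sp: "0 < b r (real k)" and mm: "m \<le> MM (b r (real k))"
  shows "2 ^ k * ff b (b r (real k)) \<le> b r (real k)"
proof -
  define s where "s = b r (real k)"
  have s0: "0 < s" using sp s_def by simp
  have "s \<le> b (real m) (real k)" unfolding s_def using r by (intro KL_mono_r[OF KL]) auto
  then have "k < NN b m s" by (rule N_gt[OF KL s0])
  also have "\<dots> \<le> NN b (MM s) s" using mm s0 unfolding s_def by (intro N_mono_m[OF KL]) auto
  finally have "k \<le> PP b s" unfolding PP_def by simp
  then have h: "(2::real) ^ k * (1/2) ^ PP b s \<le> 1" by (rule two_half)
  have "2 ^ k * ff b s = s * (2 ^ k * (1/2) ^ PP b s)" unfolding ff_def by simp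
  also have "\<dots> \<le> s * 1" using h s0 by (intro mult_left_mono) auto
  finally show ?thesis unfolding s_def by simp
qed

lemma gg_bdd: "bdd_below ((\<lambda>t. ff b t + \<bar>s - t\<bar>) ` {0..})"
  by (rule bdd_belowI[where m=0]) (auto intro: add_nonneg_nonneg ff_nonneg)

lemma gg_lower: "0 \<le> t \<Longrightarrow> gg b s \<le> ff b t + \<bar>s - t\<bar>"
  unfolding gg_def by (rule cInf_lower[OF _ gg_bdd]) auto

lemma gg_great: "(\<And>t. 0 \<le> t \<Longrightarrow> c \<le> ff b t + \<bar>s - t\<bar>) \<Longrightarrow> c \<le> gg b s"
  unfolding gg_def by (rule cInf_greatest) auto

lemma gg_nonneg: "0 \<le> gg b s"
  by (rule gg_great) (auto intro: add_nonneg_nonneg ff_nonneg)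

lemma gg_le_ff: "0 \<le> s \<Longrightarrow> gg b s \<le> ff b s"
  using gg_lower[of s s] by simp

lemma gg_zero: "gg b 0 = 0"
  using gg_le_ff[of 0] gg_nonneg[of 0] by (simp add: ff_zero)

lemma gg_lip: "gg b s \<le> gg b s' + \<bar>s - s'\<bar>"
proof -
  have "gg b s - \<bar>s - s'\<bar> \<le> gg b s'"
  proof (rule gg_great)
    fix t :: real assume "0 \<le> t"
    then have "gg b s \<le> ff b t + \<bar>s - t\<bar>" by (rule gg_lower)
    then show "gg b s - \<bar>s - s'\<bar> \<le> ff b t + \<bar>s' - t\<bar>" by linarith
  qed
  then show ?thesis by simp
qed

lemma gg_mono: "0 \<le> s \<Longrightarrow> s \<le> s' \<Longrightarrow> gg b s \<le> gg b s'"
proof -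
  assume s: "0 \<le> s" "s \<le> s'"
  show ?thesis
  proof (rule gg_great)
    fix t :: real assume t: "0 \<le> t"
    show "gg b s \<le> ff b t + \<bar>s' - t\<bar>"
    proof (cases "t \<le> s")
      case True
      then have "gg b s \<le> ff b t + \<bar>s - t\<bar>" using gg_lower t by blast
      then show ?thesis using True s by linarith
    next
      case False
      then have "gg b s \<le> ff b s" "ff b s \<le> ff b t" using gg_le_ff s by (auto intro: ff_mono)
      then show ?thesis by linarith
    qed
  qed
qed

lemma gg_lb: "0 \<le> s \<Longrightarrow> min (ff b (s/2)) (s/2) \<le> gg b s"
proof -
  assume s: "0 \<le> s"
  show ?thesis
  proof (rule gg_great)
    fix t :: real assume t: "0 \<le> t"
    show "min (ff b (s/2)) (s/2) \<le> ff b t + \<bar>s - t\<bar>"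
    proof (cases "s/2 \<le> t")
      case True
      then have "ff b (s/2) \<le> ff b t" using s by (intro ff_mono) auto
      then show ?thesis by linarith
    next
      case False
      then show ?thesis using ff_nonneg[OF t] by linarith
    qed
  qed
qed

lemma gg_pos: "0 < s \<Longrightarrow> 0 < gg b s"
proof -
  assume s: "0 < s"
  have "0 < ff b (s/2)" using s by (intro ff_pos) auto
  then have "0 < min (ff b (s/2)) (s/2)" using s by simp
  then show ?thesis using gg_lb[of s] s by linarith
qed

lemma gg_cont: "continuous_on A (gg b)"
  unfolding continuous_on_iff
proof (intro ballI allI impI)
  fix x e :: real assume "0 < e"
  show "\<exists>d>0. \<forall>x'\<in>A. dist x' x < d \<longrightarrow> dist (gg b x') (gg b x) < e"
  proof (intro exI conjI ballI impI)
    show "0 < e" by fact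
    fix x' assume "dist x' x < e"
    moreover have "gg b x' \<le> gg b x + \<bar>x' - x\<bar>" "gg b x \<le> gg b x' + \<bar>x - x'\<bar>" by (rule gg_lip)+
    ultimately show "dist (gg b x') (gg b x) < e" unfolding dist_real_def by linarith
  qed
qed

end


context
  fixes b :: "real \<Rightarrow> real \<Rightarrow> real"
  assumes KL: "class_KL b"
begin

lemma frac_le1: "0 \<le> s \<Longrightarrow> s / (1 + s) \<le> (1::real)" by simp

lemma aone_le_gg: "0 \<le> s \<Longrightarrow> aone b s \<le> gg b s"
proof -
  assume s: "0 \<le> s"
  have "aone b s = gg b s * (s / (1 + s))" unfolding aone_def by simp
  also have "\<dots> \<le> gg b s * 1" using s gg_nonneg[OF KL] by (intro mult_left_mono) auto
  finally show ?thesis by simp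
qed

lemma aone_le_ff: "0 \<le> s \<Longrightarrow> aone b s \<le> ff b s"
  using aone_le_gg gg_le_ff[OF KL] by (meson order_trans)

lemma aone_nonneg: "0 \<le> s \<Longrightarrow> 0 \<le> aone b s"
  unfolding aone_def using gg_nonneg[OF KL, of s] by simp

lemma aone_K: "class_K_inf (aone b)"
proof -
  have eq: "aone b = (\<lambda>s. gg b s * s / (1 + s))" unfolding aone_def by auto
  have cont: "continuous_on {0..} (aone b)"
    unfolding eq
    by (rule continuous_on_divide[OF continuous_on_mult[OF gg_cont[OF KL] continuous_on_id]
          continuous_on_add[OF continuous_on_const continuous_on_id]]) auto
  have sm: "strict_mono_on {0..} (aone b)"
  proof (rule strict_mono_onI)
    fix s s' :: real assume ss: "s \<in> {0..}" "s' \<in> {0..}" "s < s'"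
    have "0 < gg b s'" using ss by (intro gg_pos[OF KL]) auto
    then have pos: "0 < aone b s'" unfolding aone_def using ss by simp
    show "aone b s < aone b s'"
    proof (cases "s = 0")
      case True then show ?thesis using pos by (simp add: aone_def)
    next
      case False
      then have s0: "0 < s" using ss by auto
      have g1: "0 < gg b s" using s0 by (rule gg_pos[OF KL])
      have g2: "gg b s \<le> gg b s'" using ss by (intro gg_mono[OF KL]) auto
      have fr: "s / (1 + s) < s' / (1 + s')" using ss s0 by (simp add: field_simps)
      have "aone b s = gg b s * (s / (1 + s))" unfolding aone_def by simp
      also have "\<dots> < gg b s * (s' / (1 + s'))" using fr g1 by (rule mult_strict_left_mono)
      also have "\<dots> \<le> gg b s' * (s' / (1 + s'))" using g2 ss by (intro mult_right_mono) auto
      also have "\<dots> = aone b s'" unfolding aone_def by simp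
      finally show ?thesis .
    qed
  qed
  have z: "aone b 0 = 0" unfolding aone_def by simp
  define c where "c = (1/2::real) ^ NN b 2 1"
  have c0: "0 < c" and c1: "c \<le> 1" unfolding c_def by (auto intro: power_le_one)
  have lb: "c / 4 * s \<le> aone b s" if s: "2 \<le> s" for s
  proof -
    have "(s/2) * c \<le> ff b (s/2)" unfolding c_def using s by (intro ff_lin[OF KL]) auto
    moreover have "(s/2) * c \<le> s/2" using c1 s by (simp add: mult_left_le)
    ultimately have "(s/2) * c \<le> min (ff b (s/2)) (s/2)" by simp
    also have "\<dots> \<le> gg b s" using s by (intro gg_lb[OF KL]) auto
    finally have gl: "(s/2) * c \<le> gg b s" .
    have fr: "1/2 \<le> s / (1 + s)" using s by (simp add: field_simps)
    have "c / 4 * s = ((s/2) * c) * (1/2)" by simp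
    also have "\<dots> \<le> gg b s * (s / (1 + s))" using gl fr c0 s gg_nonneg[OF KL, of s] by (intro mult_mono) auto
    also have "\<dots> = aone b s" unfolding aone_def by simp
    finally show ?thesis .
  qed
  have "filterlim (\<lambda>s. c / 4 * s) at_top at_top"
    using c0 by (intro filterlim_tendsto_pos_mult_at_top[OF tendsto_const _ filterlim_ident]) auto
  moreover have "eventually (\<lambda>s. c / 4 * s \<le> aone b s) at_top"
    using lb unfolding eventually_at_top_linorder by blast
  ultimately have "filterlim (aone b) at_top at_top" by (rule filterlim_at_top_mono)
  then show ?thesis unfolding class_K_inf_def class_K_def using cont sm z by blast
qed

lemma aone_mono: "0 \<le> s \<Longrightarrow> s \<le> s' \<Longrightarrow> aone b s \<le> aone b s'"
  using aone_K unfolding class_K_inf_def by (blast intro: cK_mono)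

definition "Bd r = 2 ^ (NN b (nat \<lceil>r\<rceil> + 1) (1 / real (nat \<lceil>r\<rceil> + 1))) * b r 0"

lemma DD_elem_le: "0 \<le> r \<Longrightarrow> 2 ^ k * aone b (b r (real k)) \<le> Bd r"
proof -
  assume r: "0 \<le> r"
  define m where "m = nat \<lceil>r\<rceil> + 1"
  define N where "N = NN b m (1 / real m)"
  define s where "s = b r (real k)"
  have Bd: "Bd r = 2 ^ N * b r 0" unfolding Bd_def N_def m_def ..
  have rm: "r \<le> real m" unfolding m_def by linarith
  have m1: "1 \<le> m" unfolding m_def by simp
  have s0: "0 \<le> s" unfolding s_def using r by (intro KL_nonneg[OF KL]) auto
  have sb: "s \<le> b r 0" unfolding s_def using r by (intro KL_anti[OF KL]) auto
  have b0: "0 \<le> b r 0" using r by (intro KL_nonneg[OF KL]) auto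
  have N1: "(1::real) \<le> 2 ^ N" by simp
  show ?thesis
  proof (cases "s = 0")
    case True
    then show ?thesis unfolding s_def[symmetric] Bd using b0 by (simp add: aone_def)
  next
    case False
    then have sp: "0 < s" using s0 by simp
    have "2 ^ k * aone b s \<le> 2 ^ k * ff b s" using s0 by (intro mult_left_mono aone_le_ff) auto
    also have "\<dots> \<le> 2 ^ N * b r 0"
    proof (cases "m \<le> MM s")
      case True
      then have "2 ^ k * ff b s \<le> s" unfolding s_def using sp r rm by (intro KB[OF KL]) (auto simp: s_def)
      also have "\<dots> \<le> b r 0" by (rule sb)
      also have "\<dots> \<le> 2 ^ N * b r 0" using N1 b0 by (simp add: mult_le_cancel_right1)
      finally show ?thesis .
    next
      case False
      then have "\<not> s \<le> 1 / real m" using MM_big[OF sp] by blast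
      then have "1 / real m < s" by simp
      moreover have "s \<le> b (real m) (real k)" unfolding s_def using r rm by (intro KL_mono_r[OF KL]) auto
      ultimately have "1 / real m \<le> b (real m) (real k)" by simp
      then have "k < N" unfolding N_def using m1 by (intro N_gt[OF KL]) auto
      then have kN: "(2::real) ^ k \<le> 2 ^ N" by (intro power_increasing) auto
      have "2 ^ k * ff b s \<le> 2 ^ k * s" using s0 by (intro mult_left_mono ff_le[OF KL]) auto
      also have "\<dots> \<le> 2 ^ N * b r 0" using kN sb s0 by (intro mult_mono) auto
      finally show ?thesis .
    qed
    finally show ?thesis unfolding s_def Bd .
  qed
qed

lemma DD_bdd: "0 \<le> r \<Longrightarrow> bdd_above (range (\<lambda>k::nat. 2 ^ k * aone b (b r (real k))))"
  by (rule bdd_aboveI[where M="Bd r"]) (auto intro: DD_elem_le)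

lemma DD_upper: "0 \<le> r \<Longrightarrow> 2 ^ k * aone b (b r (real k)) \<le> DD b r"
  unfolding DD_def by (rule cSup_upper[OF _ DD_bdd]) auto

lemma DD_least: "(\<And>k. 2 ^ k * aone b (b r (real k)) \<le> c) \<Longrightarrow> DD b r \<le> c"
  unfolding DD_def by (rule cSup_least) auto

lemma DD_nonneg: "0 \<le> r \<Longrightarrow> 0 \<le> DD b r"
proof -
  assume r: "0 \<le> r"
  have "0 \<le> 2 ^ 0 * aone b (b r (real 0))" using r by (intro mult_nonneg_nonneg aone_nonneg KL_nonneg[OF KL]) auto
  also have "\<dots> \<le> DD b r" using r by (rule DD_upper)
  finally show ?thesis .
qed

lemma DD_small: "0 \<le> r \<Longrightarrow> r \<le> 1 \<Longrightarrow> DD b r \<le> b r 0"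
proof (rule DD_least)
  fix k assume r: "0 \<le> r" "r \<le> 1"
  define s where "s = b r (real k)"
  have s0: "0 \<le> s" unfolding s_def using r by (intro KL_nonneg[OF KL]) auto
  have sb: "s \<le> b r 0" unfolding s_def using r by (intro KL_anti[OF KL]) auto
  show "2 ^ k * aone b (b r (real k)) \<le> b r 0"
  proof (cases "s = 0")
    case True then show ?thesis using sb unfolding s_def[symmetric] by (simp add: aone_def)
  next
    case False
    then have sp: "0 < s" using s0 by simp
    have "2 ^ k * aone b s \<le> 2 ^ k * ff b s" using s0 by (intro mult_left_mono aone_le_ff) auto
    also have "\<dots> \<le> s" unfolding s_def using sp r MM_ge1 by (intro KB[OF KL, where m=1]) (auto simp: s_def)
    finally show ?thesis using sb unfolding s_def by simp
  qed
qed

lemma DD_mono: "0 \<le> r \<Longrightarrow> r \<le> r' \<Longrightarrow> DD b r \<le> DD b r'"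
proof (rule DD_least)
  fix k assume r: "0 \<le> r" "r \<le> r'"
  have "b r (real k) \<le> b r' (real k)" using r by (intro KL_mono_r[OF KL]) auto
  then have "aone b (b r (real k)) \<le> aone b (b r' (real k))"
    using r by (intro aone_mono KL_nonneg[OF KL]) auto
  then have "2 ^ k * aone b (b r (real k)) \<le> 2 ^ k * aone b (b r' (real k))" by simp
  also have "\<dots> \<le> DD b r'" using r by (intro DD_upper) auto
  finally show "2 ^ k * aone b (b r (real k)) \<le> DD b r'" .
qed

end


context
  fixes b :: "real \<Rightarrow> real \<Rightarrow> real"
  assumes KL: "class_KL b"
begin

lemma aa_elem_le: "0 \<le> s \<Longrightarrow> 0 \<le> t \<Longrightarrow> DD b t * psi (t - s) \<le> DD b (s + 1)"
proof -
  assume s: "0 \<le> s" and t: "0 \<le> t"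
  show ?thesis
  proof (cases "t \<le> s + 1")
    case True
    have "DD b t * psi (t - s) \<le> DD b t * 1"
      using DD_nonneg[OF KL t] psi_le1 by (intro mult_left_mono) auto
    also have "\<dots> \<le> DD b (s + 1)" using True t by (simp add: DD_mono[OF KL])
    finally show ?thesis .
  next
    case False
    then have "psi (t - s) = 0" by (intro psi_zero) auto
    then show ?thesis using DD_nonneg[OF KL, of "s+1"] s by simp
  qed
qed

lemma aa_bdd: "0 \<le> s \<Longrightarrow> bdd_above ((\<lambda>t. DD b t * psi (t - s)) ` {0..})"
  by (rule bdd_aboveI[where M="DD b (s + 1)"]) (auto intro: aa_elem_le)

lemma aa_upper: "0 \<le> s \<Longrightarrow> 0 \<le> t \<Longrightarrow> DD b t * psi (t - s) \<le> aa b s"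
  unfolding aa_def by (rule cSup_upper[OF _ aa_bdd]) auto

lemma aa_least: "(\<And>t. 0 \<le> t \<Longrightarrow> DD b t * psi (t - s) \<le> c) \<Longrightarrow> aa b s \<le> c"
  unfolding aa_def by (rule cSup_least) auto

lemma aa_ge_DD: "0 \<le> s \<Longrightarrow> DD b s \<le> aa b s"
  using aa_upper[of s s] by (simp add: psi_0)

lemma aa_nonneg: "0 \<le> s \<Longrightarrow> 0 \<le> aa b s"
  using aa_ge_DD DD_nonneg[OF KL] by (meson order_trans)

lemma aa_mono: "0 \<le> s \<Longrightarrow> s \<le> s' \<Longrightarrow> aa b s \<le> aa b s'"
proof (rule aa_least)
  fix t :: real assume s: "0 \<le> s" "s \<le> s'" and t: "0 \<le> t"
  have "DD b t * psi (t - s) \<le> DD b t * psi (t - s')"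
    using s DD_nonneg[OF KL t] by (intro mult_left_mono psi_anti) auto
  also have "\<dots> \<le> aa b s'" using s t by (intro aa_upper) auto
  finally show "DD b t * psi (t - s) \<le> aa b s'" .
qed

lemma aa_lip:
  assumes s: "0 \<le> s" "0 \<le> s'" "s \<le> R" "s' \<le> R"
  shows "aa b s \<le> aa b s' + DD b (R + 1) * \<bar>s - s'\<bar>"
proof (rule aa_least)
  fix t :: real assume t: "0 \<le> t"
  have L0: "0 \<le> DD b (R + 1) * \<bar>s - s'\<bar>" using s DD_nonneg[OF KL, of "R+1"] by simp
  show "DD b t * psi (t - s) \<le> aa b s' + DD b (R + 1) * \<bar>s - s'\<bar>"
  proof (cases "t \<le> R + 1")
    case True
    have p: "psi (t - s) \<le> psi (t - s') + \<bar>s - s'\<bar>" using psi_lip[of "t - s" "t - s'"] by simp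
    have "DD b t * psi (t - s) \<le> DD b t * (psi (t - s') + \<bar>s - s'\<bar>)"
      using p DD_nonneg[OF KL t] by (rule mult_left_mono)
    also have "\<dots> = DD b t * psi (t - s') + DD b t * \<bar>s - s'\<bar>" by (simp add: algebra_simps)
    also have "\<dots> \<le> aa b s' + DD b (R + 1) * \<bar>s - s'\<bar>"
      using aa_upper[OF s(2) t] DD_mono[OF KL t True] by (intro add_mono mult_right_mono) auto
    finally show ?thesis .
  next
    case False
    then have "psi (t - s) = 0" using s by (intro psi_zero) auto
    then show ?thesis using aa_nonneg[OF s(2)] L0 by simp
  qed
qed

lemma aa_cont: "continuous_on {0..} (aa b)"
  unfolding continuous_on_iff
proof (intro ballI allI impI)
  fix x e :: real assume x: "x \<in> {0..}" and e: "0 < e"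
  define L where "L = DD b (x + 2) + 1"
  have D0: "0 \<le> DD b (x + 2)" using x by (intro DD_nonneg[OF KL]) auto
  then have L0: "0 < L" unfolding L_def by simp
  define d where "d = min 1 (e / L)"
  have d0: "0 < d" unfolding d_def using e L0 by simp
  show "\<exists>d>0. \<forall>x'\<in>{0..}. dist x' x < d \<longrightarrow> dist (aa b x') (aa b x) < e"
  proof (intro exI conjI ballI impI)
    show "0 < d" by fact
    fix x' assume x': "x' \<in> {0..}" and dd: "dist x' x < d"
    have dd': "\<bar>x' - x\<bar> < d" using dd unfolding dist_real_def .
    have le: "x' \<le> x + 1" using dd' unfolding d_def by auto
    have h1: "aa b x' \<le> aa b x + DD b (x + 1 + 1) * \<bar>x' - x\<bar>"
      using x x' le by (intro aa_lip) auto
    have h2: "aa b x \<le> aa b x' + DD b (x + 1 + 1) * \<bar>x - x'\<bar>"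
      using x x' le by (intro aa_lip) auto
    have "DD b (x + 2) * \<bar>x' - x\<bar> \<le> DD b (x + 2) * d" using dd' D0 by (intro mult_left_mono) auto
    also have "\<dots> < L * d" unfolding L_def using d0 by (simp add: algebra_simps)
    also have "\<dots> \<le> L * (e / L)" unfolding d_def using L0 by (intro mult_left_mono) auto
    also have "\<dots> = e" using L0 by simp
    finally have "DD b (x + 2) * \<bar>x' - x\<bar> < e" .
    then show "dist (aa b x') (aa b x) < e" using h1 h2 unfolding dist_real_def
      by (simp add: abs_minus_commute add.assoc)
  qed
qed

lemma atwo_K: "class_K_inf (atwo b)"
proof -
  have eq: "atwo b = (\<lambda>s. b s 0 + s * aa b s + s)" unfolding atwo_def by auto
  have K0: "class_K (\<lambda>r. b r 0)" by (rule KL_K[OF KL]) simp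
  have cont: "continuous_on {0..} (atwo b)" unfolding eq
    by (rule continuous_on_add[OF continuous_on_add[OF cK_cont[OF K0] continuous_on_mult[OF continuous_on_id aa_cont]] continuous_on_id])
  have sm: "strict_mono_on {0..} (atwo b)"
  proof (rule strict_mono_onI)
    fix s s' :: real assume ss: "s \<in> {0..}" "s' \<in> {0..}" "s < s'"
    have "b s 0 < b s' 0" using cK_smono[OF K0, of s s'] ss by simp
    moreover have "s * aa b s \<le> s' * aa b s'" using ss aa_mono[of s s'] aa_nonneg[of s]
      by (intro mult_mono) auto
    ultimately show "atwo b s < atwo b s'" unfolding atwo_def using ss by simp
  qed
  have z: "atwo b 0 = 0" unfolding atwo_def using cK_zero[OF K0] by simp
  have "eventually (\<lambda>s. s \<le> atwo b s) at_top"
    unfolding eventually_at_top_linorder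
  proof (intro exI allI impI)
    fix s :: real assume "0 \<le> s"
    then show "s \<le> atwo b s" unfolding atwo_def
      using KL_nonneg[OF KL, of s 0] aa_nonneg[of s] by simp
  qed
  then have "filterlim (atwo b) at_top at_top" by (rule filterlim_at_top_mono[OF filterlim_ident])
  then show ?thesis unfolding class_K_inf_def class_K_def using cont sm z by blast
qed

lemma atwo_ge_DD: "0 \<le> s \<Longrightarrow> DD b s \<le> atwo b s"
proof -
  assume s: "0 \<le> s"
  have n1: "0 \<le> s * aa b s" using s aa_nonneg[OF s] by simp
  show ?thesis
  proof (cases "s \<le> 1")
    case True
    then have "DD b s \<le> b s 0" using s by (intro DD_small[OF KL])
    then show ?thesis unfolding atwo_def using n1 s by simp
  next
    case False
    have "DD b s \<le> aa b s" using s by (rule aa_ge_DD)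
    also have "\<dots> \<le> s * aa b s" using False aa_nonneg[OF s] by (simp add: mult_le_cancel_right1)
    finally show ?thesis unfolding atwo_def using KL_nonneg[OF KL, of s 0] s by simp
  qed
qed

end


definition FW :: "(nat \<times> nat \<times> 'a) set \<Rightarrow> nat \<Rightarrow> (int \<Rightarrow> 'a) set" where
  "FW E j = {z. \<exists>s::nat \<Rightarrow> nat. s 0 = j \<and> (\<forall>k. (s k, s (Suc k), z (int k)) \<in> E)}"

lemma ext_walk:
  assumes R: "\<forall>v<K. \<exists>u i. R v u i \<and> u < K" and v: "v < K"
  shows "\<exists>s lab. s 0 = v \<and> (\<forall>n. R (s n) (s (Suc n)) (lab n) \<and> s n < K)"
proof -
  define nx where "nx w = (SOME p. R w (fst p) (snd p) \<and> fst p < K)" for w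
  have nx: "R w (fst (nx w)) (snd (nx w)) \<and> fst (nx w) < K" if "w < K" for w
  proof -
    from R that obtain u i where "R w u i \<and> u < K" by blast
    then show ?thesis unfolding nx_def
      using someI[of "\<lambda>p. R w (fst p) (snd p) \<and> fst p < K" "(u, i)"] by simp
  qed
  define s where "s n = ((fst \<circ> nx) ^^ n) v" for n
  have sS: "s (Suc n) = fst (nx (s n))" for n unfolding s_def by simp
  have sK: "s n < K" for n
  proof (induction n)
    case 0 then show ?case using v by (simp add: s_def)
  next
    case (Suc n) then show ?case using nx[of "s n"] sS by simp
  qed
  have H: "s 0 = v \<and> (\<forall>n. R (s n) (s (Suc n)) (snd (nx (s n))) \<and> s n < K)"
    using sK nx sS by (simp add: s_def[of 0])
  show ?thesis
    apply (rule exI[where x=s], rule exI[where x="\<lambda>n. snd (nx (s n))"])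
    using H by simp
qed

lemma LG_out: "labeled_graph K E \<Longrightarrow> \<forall>v<K. \<exists>u i. (v, u, i) \<in> E \<and> u < K"
  unfolding labeled_graph_def by fast

lemma LG_in: "labeled_graph K E \<Longrightarrow> \<forall>v<K. \<exists>u i. (u, v, i) \<in> E \<and> u < K"
  unfolding labeled_graph_def by fast

lemma LG_edge: "labeled_graph K E \<Longrightarrow> (j, l, i) \<in> E \<Longrightarrow> j < K \<and> l < K"
  unfolding labeled_graph_def by fast

lemma FW_nonempty:
  assumes LG: "labeled_graph K E" and j: "j < K"
  shows "\<exists>z. z \<in> FW E j"
proof -
  obtain s lab where s: "s 0 = j" "\<forall>n. (s n, s (Suc n), lab n) \<in> E \<and> s n < K"
    using ext_walk[OF LG_out[OF LG] j] by blast
  have "(\<lambda>k. lab (nat k)) \<in> FW E j" unfolding FW_def using s by auto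
  then show ?thesis by blast
qed

lemma FW_to_Z:
  assumes LG: "labeled_graph K E" and j: "j < K" and z: "z \<in> FW E j"
  shows "\<exists>z'\<in>walk_labels E. \<forall>n::nat. z' (int n) = z (int n)"
proof -
  obtain s where s0: "s 0 = j" and s: "\<And>k. (s k, s (Suc k), z (int k)) \<in> E"
    using z unfolding FW_def by blast
  obtain bb bl where b0: "bb 0 = j" and bs: "\<And>n. (bb (Suc n), bb n, bl n) \<in> E"
    using ext_walk[OF LG_in[OF LG] j] by blast
  define S where "S k = (if 0 \<le> k then s (nat k) else bb (nat (- k)))" for k :: int
  define Z where "Z k = (if 0 \<le> k then z k else bl (nat (- k) - 1))" for k :: int
  have edge: "(S k, S (k + 1), Z k) \<in> E" for k
  proof (cases "0 \<le> k")
    case True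
    then have "S k = s (nat k)" "S (k + 1) = s (Suc (nat k))" "Z k = z (int (nat k))"
      unfolding S_def Z_def by (auto simp: nat_add_distrib)
    then show ?thesis using s[of "nat k"] by simp
  next
    case False
    define n where "n = nat (- k) - 1"
    have kn: "k = - int (Suc n)" unfolding n_def using False by simp
    have nk: "nat (- k) = Suc n" unfolding n_def using False by simp
    have "S k = bb (Suc n)" "Z k = bl n" unfolding S_def Z_def using False nk by auto
    moreover have "S (k + 1) = bb n"
    proof (cases "n = 0")
      case True then show ?thesis unfolding S_def kn using s0 b0 by simp
    next
      case False then show ?thesis unfolding S_def kn by simp
    qed
    ultimately show ?thesis using bs[of n] by simp
  qed
  have "Z \<in> walk_labels E" unfolding walk_labels_def using edge by blast
  moreover have "\<forall>n::nat. Z (int n) = z (int n)" unfolding Z_def by simp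
  ultimately show ?thesis by blast
qed

lemma sol_cong: "(\<And>n. n < k \<Longrightarrow> z (int n) = z' (int n)) \<Longrightarrow> sw_sol ft k x z = sw_sol ft k x z'"
  by (induction k) auto

lemma sol_shift: "sw_sol ft (Suc k) x z = sw_sol ft k (ft x (z 0)) (\<lambda>n. z (n + 1))"
proof (induction k)
  case 0 then show ?case by simp
next
  case (Suc k)
  have "sw_sol ft (Suc (Suc k)) x z = ft (sw_sol ft (Suc k) x z) (z (int (Suc k)))" by (simp only: sw_sol.simps)
  also have "\<dots> = ft (sw_sol ft k (ft x (z 0)) (\<lambda>n. z (n + 1))) (z (int k + 1))"
    using Suc.IH by (simp only: of_nat_Suc add.commute)
  also have "\<dots> = sw_sol ft (Suc k) (ft x (z 0)) (\<lambda>n. z (n + 1))" by (simp only: sw_sol.simps)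
  finally show ?case .
qed



lemma GUAS_imp_lyap:
  fixes ft :: "'x::real_normed_vector \<Rightarrow> 'a \<Rightarrow> 'x"
  assumes LG: "labeled_graph K E" and G: "GUAS_sw ft (walk_labels E)"
  shows "\<exists>W. graph_lyapunov_sw ft K E W"
proof -
  obtain b where KL: "class_KL b" and bnd: "\<And>k x0 z. z \<in> walk_labels E \<Longrightarrow> norm (sw_sol ft k x0 z) \<le> b (norm x0) (real k)"
    using G unfolding GUAS_sw_def by blast
  define S where "S x j = {2 ^ k * aone b (norm (sw_sol ft k x z)) | k z. z \<in> FW E j}" for x j
  define W where "W x j = Sup (S x j)" for x j
  have A1: "class_K_inf (aone b)" by (rule aone_K[OF KL])
  have A2: "class_K_inf (atwo b)" by (rule atwo_K[OF KL])
  have elem: "2 ^ k * aone b (norm (sw_sol ft k x z)) \<le> atwo b (norm x)" if j: "j < K" and z: "z \<in> FW E j" for j k x z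
  proof -
    obtain z' where z': "z' \<in> walk_labels E" and ag: "\<forall>n::nat. z' (int n) = z (int n)"
      using FW_to_Z[OF LG j z] by blast
    have "sw_sol ft k x z = sw_sol ft k x z'" using ag by (intro sol_cong) auto
    then have nb: "norm (sw_sol ft k x z) \<le> b (norm x) (real k)" using bnd[OF z'] by simp
    have "aone b (norm (sw_sol ft k x z)) \<le> aone b (b (norm x) (real k))"
      using nb by (intro aone_mono[OF KL]) auto
    then have "2 ^ k * aone b (norm (sw_sol ft k x z)) \<le> 2 ^ k * aone b (b (norm x) (real k))" by simp
    also have "\<dots> \<le> DD b (norm x)" by (intro DD_upper[OF KL]) auto
    also have "\<dots> \<le> atwo b (norm x)" by (intro atwo_ge_DD[OF KL]) auto
    finally show ?thesis .
  qed
  have bdd: "bdd_above (S x j)" if "j < K" for x j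
    unfolding S_def by (rule bdd_aboveI[where M="atwo b (norm x)"]) (auto intro: elem[OF that])
  have ne: "S x j \<noteq> {}" if "j < K" for x j
    using FW_nonempty[OF LG that] unfolding S_def by blast
  have up: "W x j \<le> atwo b (norm x)" if j: "j < K" for x j
    unfolding W_def by (rule cSup_least[OF ne[OF j]]) (auto simp: S_def intro: elem[OF j])
  have lo: "aone b (norm x) \<le> W x j" if j: "j < K" for x j
  proof -
    obtain z where z: "z \<in> FW E j" using FW_nonempty[OF LG j] by blast
    have "2 ^ 0 * aone b (norm (sw_sol ft 0 x z)) \<in> S x j" unfolding S_def using z by blast
    then have "2 ^ 0 * aone b (norm (sw_sol ft 0 x z)) \<le> W x j"
      unfolding W_def by (rule cSup_upper[OF _ bdd[OF j]])
    then show ?thesis by simp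
  qed
  have dec: "W (ft x i) l \<le> 1/2 * W x j" if e: "(j, l, i) \<in> E" for x j l i
  proof -
    have jl: "j < K" "l < K" using LG_edge[OF LG e] by auto
    have "W (ft x i) l \<le> 1/2 * W x j" unfolding W_def[of "ft x i"]
    proof (rule cSup_least[OF ne[OF jl(2)]])
      fix y assume "y \<in> S (ft x i) l"
      then obtain k z' where y: "y = 2 ^ k * aone b (norm (sw_sol ft k (ft x i) z'))" and z': "z' \<in> FW E l"
        unfolding S_def by blast
      obtain s' where s'0: "s' 0 = l" and s': "\<And>k. (s' k, s' (Suc k), z' (int k)) \<in> E"
        using z' unfolding FW_def by blast
      define z where "z n = (if n = 0 then i else z' (n - 1))" for n :: int
      define s where "s n = (case n of 0 \<Rightarrow> j | Suc m \<Rightarrow> s' m)" for n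
      have "\<forall>k. (s k, s (Suc k), z (int k)) \<in> E"
      proof
        fix k show "(s k, s (Suc k), z (int k)) \<in> E"
        proof (cases k)
          case 0 then show ?thesis using e s'0 unfolding s_def z_def by simp
        next
          case (Suc m) then show ?thesis using s'[of m] unfolding s_def z_def by simp
        qed
      qed
      moreover have "s 0 = j" unfolding s_def by simp
      ultimately have zF: "z \<in> FW E j" unfolding FW_def by blast
      have z0: "z 0 = i" unfolding z_def by simp
      have "sw_sol ft (Suc k) x z = sw_sol ft k (ft x i) (\<lambda>n. z (n + 1))"
        unfolding sol_shift z0 by (rule refl)
      also have "\<dots> = sw_sol ft k (ft x i) z'"
        by (rule sol_cong) (simp add: z_def)
      finally have eq: "sw_sol ft (Suc k) x z = sw_sol ft k (ft x i) z'" .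
      have mem: "2 ^ Suc k * aone b (norm (sw_sol ft (Suc k) x z)) \<in> S x j" unfolding S_def using zF by blast
      have "2 ^ Suc k * aone b (norm (sw_sol ft (Suc k) x z)) \<le> W x j"
        unfolding W_def by (rule cSup_upper[OF mem bdd[OF jl(1)]])
      then show "y \<le> 1/2 * W x j" unfolding y eq[symmetric] by simp
    qed
    then show ?thesis .
  qed
  have "graph_lyapunov_sw ft K E W"
    unfolding graph_lyapunov_sw_def
  proof (intro exI conjI allI impI ballI)
    show "class_K_inf (aone b)" by (rule A1)
    show "class_K_inf (atwo b)" by (rule A2)
    show "0 \<le> (1/2::real)" by simp
    show "(1/2::real) < 1" by simp
    fix x
    { fix j :: nat assume "j < K"
      then show "aone b (norm x) \<le> W x j" "W x j \<le> atwo b (norm x)" using lo up by auto }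
    fix p assume "p \<in> E"
    then show "case p of (j, l, i) \<Rightarrow> W (ft x i) l \<le> 1/2 * W x j" using dec by (auto split: prod.splits)
  qed
  then show ?thesis by blast
qed

theorem mainTheorem6:
  fixes ft :: "real^'n \<Rightarrow> 'a::countable \<Rightarrow> real^'n"
    and K :: nat and E :: "(nat \<times> nat \<times> 'a) set" and Z :: "(int \<Rightarrow> 'a) set"
  assumes "labeled_graph K E"
    and "Z = walk_labels E"
  shows "GUAS_sw ft Z \<longleftrightarrow> (\<exists>W. graph_lyapunov_sw ft K E W)"
  using GUAS_imp_lyap[OF assms(1)] lyap_imp_GUAS[OF assms(1)] assms(2) by blast


end
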